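(* Fix stress levels $x_1<x_2$, a stress-change time $\tau>0$, and inspection times $0=t_0<t_1<\cdots<t_L$ with $t_k=\tau$ for some $1\le k<L$. Let $\theta=(\gamma_0,\gamma_1,\gamma_2,a_1)\in\Theta=(0,\infty)^4$, and let $s=s(\theta)=u-\tau$, where $u$ is the unique positive root of $\frac{\gamma_2}{3}u^3+\frac{\gamma_1}{2}u^2+\gamma_0u-e^{a_1(x_1-x_2)}\left(\gamma_0\tau+\gamma_1\frac{\tau^2}{2}+\gamma_2\frac{\tau^3}{3}\right)=0$. Define $$R_\theta(t,x_1)=\exp\!\Big(-e^{a_1x_1}\big(\gamma_0t+\gamma_1\tfrac{t^2}{2}+\gamma_2\tfrac{t^3}{3}\big)\Big),\quad R_\theta(t,x_2)=\exp\!\Big(-e^{a_1x_2}\big(\gamma_0(t+s)+\gamma_1\tfrac{(t+s)^2}{2}+\gamma_2\tfrac{(t+s)^3}{3}\big)\Big),$$ and $R_\theta(t)=R_\theta(t,x_1)$ for $0\le t\le\tau$, $R_\theta(t)=R_\theta(t,x_2)$ for $t\ge\tau$. Let $\pi_j(\theta)=R_\theta(t_{j-1})-R_\theta(t_j)$ for $j=1,\dots,L$, $\pi_{L+1}(\theta)=R_\theta(t_L)$, $\pi(\theta)=(\pi_1(\theta),\dots,\pi_{L+1}(\theta))^T$. Given counts $(n_1,\dots,n_{L+1})$ with $N=\sum_jn_j$, $\widehat p=(n_1/N,\dots,n_{L+1}/N)^T$, and $\beta\ge0$, let $\widehat\theta_\beta$ be a minimizer over $\Theta$ of $d_\beta(\widehat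 p,\pi(\theta))$, where for $\beta>0$ $$d_\beta(\widehat p,\pi(\theta))=\sum_{j=1}^{L+1}\Big[\pi_j(\theta)^{\beta+1}-\big(1+\tfrac1\beta\big)\pi_j(\theta)^\beta\widehat p_j+\tfrac1\beta\widehat p_j^{\beta+1}\Big]$$ and for $\beta=0$, $d_0(\widehat p,\pi(\theta))=\sum_j\widehat p_j\log(\widehat p_j/\pi_j(\theta))$. Then $\widehat\theta_\beta$ satisfies $U_\beta(\widehat\theta_\beta)=0\in\mathbb{R}^4$, where $$U_\beta(\theta)=W(\theta)^TD(\theta)^{\beta-1}\big(\widehat p-\pi(\theta)\big),$$ $D(\theta)=\mathrm{diag}(\pi_1(\theta),\dots,\pi_{L+1}(\theta))$, and $W(\theta)$ is the $(L+1)\times4$ Jacobian matrix of $\pi(\theta)$ whose $j$-th row is $w_j^T$ with $w_j=\frac{\partial R_\theta(t_{j-1},x_1)}{\partial\theta}-\frac{\partial R_\theta(t_j,x_1)}{\partial\theta}$ if $t_{j-1}<\tau$, $w_j=\frac{\partial R_\theta(t_{j-1},x_2)}{\partial\theta}-\frac{\partial R_\theta(t_j,x_2)}{\partial\theta}$ if $\tau\le t_{j-1}$ and $j\le L$, and $w_{L+1}=\frac{\partial R_\theta(t_L,x_2)}{\partial\theta}$. Here, with $k_1(t)=\gamma_2t^2+\gamma_1t+\gamma_0$ and $k_2(t)=\frac{\gamma_2}{3}t^2+\frac{\gamma_1}{2}t+\gamma_0$, $$\frac{\partial R_\theta(t,x_1)}{\partial\gamma_0}=-R_\theta(t,x_1)e^{a_1x_1}t,\quad\frac{\partial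 R_\theta(t,x_1)}{\partial\gamma_1}=-R_\theta(t,x_1)e^{a_1x_1}\frac{t^2}{2},\quad\frac{\partial R_\theta(t,x_1)}{\partial\gamma_2}=-R_\theta(t,x_1)e^{a_1x_1}\frac{t^3}{3},$$ $$\frac{\partial R_\theta(t,x_1)}{\partial a_1}=-R_\theta(t,x_1)e^{a_1x_1}t\,k_2(t)\,x_1,$$ $$\frac{\partial R_\theta(t,x_2)}{\partial\gamma_0}=-R_\theta(t,x_2)e^{a_1x_2}\Big((t+s)+(\tau+s)\frac{k_1(t+s)}{k_1(\tau+s)}\Big(\frac{k_2(\tau+s)}{k_2(\tau)}-1\Big)\Big),$$ $$\frac{\partial R_\theta(t,x_2)}{\partial\gamma_1}=-R_\theta(t,x_2)e^{a_1x_2}\Big(\frac{(t+s)^2}{2}+\frac{\tau+s}{2}\frac{k_1(t+s)}{k_1(\tau+s)}\Big(\tau\frac{k_2(\tau+s)}{k_2(\tau)}-(\tau+s)\Big)\Big),$$ $$\frac{\partial R_\theta(t,x_2)}{\partial\gamma_2}=-R_\theta(t,x_2)e^{a_1x_2}\Big(\frac{(t+s)^3}{3}+\frac{\tau+s}{3}\frac{k_1(t+s)}{k_1(\tau+s)}\Big(\tau^2\frac{k_2(\tau+s)}{k_2(\tau)}-(\tau+s)^2\Big)\Big),$$ $$\frac{\partial R_\theta(t,x_2)}{\partial a_1}=-R_\theta(t,x_2)e^{a_1x_2}\Big[(t+s)k_2(t+s)x_2+\frac{k_1(t+s)}{k_1(\tau+s)}(\tau+s)k_2(\tau+s)(x_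1-x_2)\Big].$$
   Context: Interval-monitored simple step-stress accelerated life test under a proportional hazards model with quadratic baseline hazard $h_0(t)=\gamma_0+\gamma_1t+\gamma_2t^2$ and stress effect $e^{a_1x}$, combined with the cumulative exposure model (the shift $s$ makes the cumulative hazard continuous at $\tau$, with $s<0$ and $\tau+s>0$). $N$ devices are tested; $n_j$ is the number failing in $(t_{j-1},t_j]$ for $j\le L$ and $n_{L+1}$ the number surviving past $t_L$. Stress is $x_1$ on $[0,\tau)$ and $x_2$ afterwards. *)

theory Defs
  imports "HOL-Analysis.Analysis"
begin

text \<open>Parameter vector theta = (gamma0, gamma1, gamma2, a1) as a real^4:
  theta$1 = gamma0, theta$2 = gamma1, theta$3 = gamma2, theta$4 = a1.\<close>

definition Theta :: "(real^4) set" where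
  "Theta = {th. \<forall>i. th $ i > 0}"

definition Hc :: "real^4 \<Rightarrow> real \<Rightarrow> real" where
  "Hc th t = th$1 * t + th$2 * t^2 / 2 + th$3 * t^3 / 3"

definition k1 :: "real^4 \<Rightarrow> real \<Rightarrow> real" where
  "k1 th t = th$3 * t^2 + th$2 * t + th$1"

definition k2 :: "real^4 \<Rightarrow> real \<Rightarrow> real" where
  "k2 th t = th$3 / 3 * t^2 + th$2 / 2 * t + th$1"

definition shift :: "real \<Rightarrow> real \<Rightarrow> real \<Rightarrow> real^4 \<Rightarrow> real" where
  "shift x1 x2 \<tau> th =
     (THE u. u > 0 \<and> th$3 / 3 * u^3 + th$2 / 2 * u^2 + th$1 * u
        - exp (th$4 * (x1 - x2)) * (th$1 * \<tau> + th$2 * \<tau>^2 / 2 + th$3 * \<tau>^3 / 3) = 0) - \<tau>"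

definition R1 :: "real \<Rightarrow> real^4 \<Rightarrow> real \<Rightarrow> real" where
  "R1 x1 th t = exp (- exp (th$4 * x1) * Hc th t)"

definition R2 :: "real \<Rightarrow> real \<Rightarrow> real \<Rightarrow> real^4 \<Rightarrow> real \<Rightarrow> real" where
  "R2 x1 x2 \<tau> th t = exp (- exp (th$4 * x2) * Hc th (t + shift x1 x2 \<tau> th))"

definition Rel :: "real \<Rightarrow> real \<Rightarrow> real \<Rightarrow> real^4 \<Rightarrow> real \<Rightarrow> real" where
  "Rel x1 x2 \<tau> th t = (if t \<le> \<tau> then R1 x1 th t else R2 x1 x2 \<tau> th t)"

definition cellprob :: "real \<Rightarrow> real \<Rightarrow> real \<Rightarrow> (nat \<Rightarrow> real) \<Rightarrow> nat \<Rightarrow> real^4 \<Rightarrow> nat \<Rightarrow> real" where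
  "cellprob x1 x2 \<tau> t L th j =
     (if j \<le> L then Rel x1 x2 \<tau> th (t (j - 1)) - Rel x1 x2 \<tau> th (t j)
      else Rel x1 x2 \<tau> th (t L))"

definition phat :: "(nat \<Rightarrow> nat) \<Rightarrow> nat \<Rightarrow> nat \<Rightarrow> real" where
  "phat n L j = real (n j) / real (\<Sum>i=1..L+1. n i)"

definition dpd :: "real \<Rightarrow> nat \<Rightarrow> (nat \<Rightarrow> real) \<Rightarrow> (nat \<Rightarrow> real) \<Rightarrow> real" where
  "dpd \<beta> L p q =
     (if \<beta> = 0 then (\<Sum>j=1..L+1. p j * ln (p j / q j))
      else (\<Sum>j=1..L+1. q j powr (\<beta> + 1) - (1 + 1 / \<beta>) * q j powr \<beta> * p j
                         + 1 / \<beta> * p j powr (\<beta> + 1)))"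

definition dR1 :: "real \<Rightarrow> real^4 \<Rightarrow> real \<Rightarrow> real^4" where
  "dR1 x1 th t = (let c = - R1 x1 th t * exp (th$4 * x1) in
     (\<chi> i. if i = 1 then c * t
           else if i = 2 then c * (t^2 / 2)
           else if i = 3 then c * (t^3 / 3)
           else c * (t * k2 th t * x1)))"

definition dR2 :: "real \<Rightarrow> real \<Rightarrow> real \<Rightarrow> real^4 \<Rightarrow> real \<Rightarrow> real^4" where
  "dR2 x1 x2 \<tau> th t = (let s = shift x1 x2 \<tau> th;
       c = - R2 x1 x2 \<tau> th t * exp (th$4 * x2);
       q = k1 th (t + s) / k1 th (\<tau> + s);
       r = k2 th (\<tau> + s) / k2 th \<tau> in
     (\<chi> i. if i = 1 then c * ((t + s) + (\<tau> + s) * q * (r - 1))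
           else if i = 2 then c * ((t + s)^2 / 2 + (\<tau> + s) / 2 * q * (\<tau> * r - (\<tau> + s)))
           else if i = 3 then c * ((t + s)^3 / 3 + (\<tau> + s) / 3 * q * (\<tau>^2 * r - (\<tau> + s)^2))
           else c * ((t + s) * k2 th (t + s) * x2 + q * (\<tau> + s) * k2 th (\<tau> + s) * (x1 - x2))))"

definition wrow :: "real \<Rightarrow> real \<Rightarrow> real \<Rightarrow> (nat \<Rightarrow> real) \<Rightarrow> nat \<Rightarrow> real^4 \<Rightarrow> nat \<Rightarrow> real^4" where
  "wrow x1 x2 \<tau> t L th j =
     (if j \<le> L then
        (if t (j - 1) < \<tau> then dR1 x1 th (t (j - 1)) - dR1 x1 th (t j)
         else dR2 x1 x2 \<tau> th (t (j - 1)) - dR2 x1 x2 \<tau> th (t j))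
      else dR2 x1 x2 \<tau> th (t L))"

text \<open>Estimating function U_beta(theta) = W^T D^(beta-1) (phat - pi), written componentwise.\<close>
definition Ubeta :: "real \<Rightarrow> real \<Rightarrow> real \<Rightarrow> (nat \<Rightarrow> real) \<Rightarrow> nat \<Rightarrow> (nat \<Rightarrow> nat) \<Rightarrow> real \<Rightarrow> real^4 \<Rightarrow> real^4" where
  "Ubeta x1 x2 \<tau> t L n \<beta> th =
     (\<chi> i. \<Sum>j=1..L+1. wrow x1 x2 \<tau> t L th j $ i
              * cellprob x1 x2 \<tau> t L th j powr (\<beta> - 1)
              * (phat n L j - cellprob x1 x2 \<tau> t L th j))"

end

theory Submission
  imports Defs
begin

lemma Hc_k2: "Hc th w = w * k2 th w"
  by (simp add: Hc_def k2_def power2_eq_square power3_eq_cube algebra_simps)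

lemma Hc_lin: "Hc (th + h *\<^sub>R v) w = Hc th w + h * Hc v w"
  unfolding Hc_def by (simp add: ring_distribs add_divide_distrib)

lemma Hc_0[simp]: "Hc th 0 = 0" by (simp add: Hc_def)

lemma Theta_pos: "th \<in> Theta \<Longrightarrow> th$i > 0" by (simp add: Theta_def)

lemma Hc_strict_mono:
  assumes "th \<in> Theta" "0 \<le> a" "a < b"
  shows "Hc th a < Hc th b"
proof -
  have p: "th$1 > 0" "th$2 > 0" "th$3 > 0" using assms(1) by (auto simp: Theta_def)
  have "a^2 \<le> b^2" "a^3 \<le> b^3" using assms by (simp_all add: power_mono)
  hence "th$2 * a^2 \<le> th$2 * b^2" "th$3 * a^3 \<le> th$3 * b^3" using p by auto
  moreover have "th$1 * a < th$1 * b" using p assms by auto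
  ultimately show ?thesis unfolding Hc_def by linarith
qed

lemma Hc_mono:
  assumes "th \<in> Theta" "0 \<le> a" "a \<le> b"
  shows "Hc th a \<le> Hc th b"
  using Hc_strict_mono[OF assms(1,2)] assms(3) by (cases "a = b") (auto intro: less_imp_le)

lemma Hc_pos: "th \<in> Theta \<Longrightarrow> 0 < a \<Longrightarrow> 0 < Hc th a"
  using Hc_strict_mono[of th 0 a] by simp

lemma cubic_eq: "th$3 / 3 * u^3 + th$2 / 2 * u^2 + th$1 * u = Hc th u"
  by (simp add: Hc_def algebra_simps)

lemma root_ex1:
  assumes "th \<in> Theta" "C > 0"
  shows "\<exists>!u. u > 0 \<and> Hc th u - C = 0"
proof -
  have p: "th$1 > 0" "th$2 > 0" "th$3 > 0" using assms(1) by (auto simp: Theta_def)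
  define b where "b = C / th$1"
  have b: "b > 0" using p assms by (simp add: b_def)
  have "Hc th b \<ge> th$1 * b"
    using p b unfolding Hc_def by (simp add: add_nonneg_nonneg)
  hence hb: "Hc th b \<ge> C" using p by (simp add: b_def)
  have cont: "\<forall>x. 0 \<le> x \<and> x \<le> b \<longrightarrow> isCont (Hc th) x"
    unfolding Hc_def by (intro allI impI continuous_intros) auto
  have h0: "Hc th 0 \<le> C" using assms by simp
  have "\<exists>x\<ge>0. x \<le> b \<and> Hc th x = C" by (rule IVT[OF h0 hb _ cont]) (use b in simp)
  then obtain x where x: "x \<ge> 0" "x \<le> b" "Hc th x = C" by blast
  have "x \<noteq> 0" using x(3) assms(2) by (cases "x = 0") simp_all
  hence "x > 0" using x by linarith
  moreover have uniq: "y = x" if "y > 0" "Hc th y - C = 0" for y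
  proof (rule ccontr)
    assume "y \<noteq> x"
    hence "y < x \<or> x < y" by linarith
    thus False
    proof
      assume "y < x"
      from Hc_strict_mono[OF assms(1) _ this] that x show False by simp
    next
      assume "x < y"
      from Hc_strict_mono[OF assms(1) _ this] that x show False by simp
    qed
  qed
  ultimately show ?thesis
  proof (intro ex1I[of _ x])
    show "x > 0 \<and> Hc th x - C = 0" using \<open>x > 0\<close> x(3) by simp
  next
    fix y assume "y > 0 \<and> Hc th y - C = 0"
    thus "y = x" using uniq by meson
  qed
qed

lemma shift_char:
  assumes "th \<in> Theta" "\<tau> > 0"
  shows "shift x1 x2 \<tau> th + \<tau> > 0"
    "Hc th (shift x1 x2 \<tau> th + \<tau>) = exp (th$4 * (x1 - x2)) * Hc th \<tau>"
proof -
  define C where "C = exp (th$4 * (x1 - x2)) * Hc th \<tau>"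
  have C: "C > 0" using Hc_pos[OF assms] by (simp add: C_def)
  have eq: "(\<lambda>u. u > 0 \<and> th$3 / 3 * u^3 + th$2 / 2 * u^2 + th$1 * u
        - exp (th$4 * (x1 - x2)) * (th$1 * \<tau> + th$2 * \<tau>^2 / 2 + th$3 * \<tau>^3 / 3) = 0)
     = (\<lambda>u. u > 0 \<and> Hc th u - C = 0)"
    unfolding cubic_eq C_def Hc_def[of th \<tau>] ..
  define U where "U = (THE u. u > 0 \<and> Hc th u - C = 0)"
  have sh: "shift x1 x2 \<tau> th = U - \<tau>"
    unfolding shift_def eq U_def ..
  have "U > 0 \<and> Hc th U - C = 0"
    unfolding U_def by (rule theI'[OF root_ex1[OF assms(1) C]])
  then show "shift x1 x2 \<tau> th + \<tau> > 0"
    "Hc th (shift x1 x2 \<tau> th + \<tau>) = exp (th$4 * (x1 - x2)) * Hc th \<tau>"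
    unfolding sh C_def by auto
qed

definition Sl :: "real^4 \<Rightarrow> real \<Rightarrow> real \<Rightarrow> real" where
  "Sl th a b = th$1 + th$2 * (a + b) / 2 + th$3 * (a^2 + a*b + b^2) / 3"

lemma Hc_diff: "Hc th a - Hc th b = Sl th a b * (a - b)"
  unfolding Hc_def Sl_def by (simp add: field_simps power2_eq_square power3_eq_cube)

lemma Sl_same: "Sl th a a = k1 th a"
  unfolding Sl_def k1_def by (simp add: field_simps power2_eq_square)

lemma Sl_pos: assumes "th \<in> Theta" "0 \<le> a" "0 \<le> b" shows "Sl th a b > 0"
proof -
  have p: "th$1 > 0" "th$2 > 0" "th$3 > 0" using assms(1) by (auto simp: Theta_def)
  have "0 \<le> a^2 + a*b + b^2" using assms by simp
  hence "0 \<le> th$3 * (a^2 + a*b + b^2) / 3" using p by simp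
  moreover have "0 \<le> th$2 * (a + b) / 2" using p assms by simp
  ultimately show ?thesis using p unfolding Sl_def by linarith
qed

lemma ev_abs_lt: "d > 0 \<Longrightarrow> eventually (\<lambda>h::real. \<bar>h\<bar> < d) (at 0)"
  unfolding eventually_at by (intro exI[of _ d]) (auto simp: dist_real_def)

lemma ev_abs_lt_nhds: "d > 0 \<Longrightarrow> eventually (\<lambda>h::real. \<bar>h\<bar> < d) (nhds 0)"
  unfolding eventually_nhds_metric by (intro exI[of _ d]) (auto simp: dist_real_def)

lemma u_deriv:
  fixes th v :: "real^4"
  assumes th: "th \<in> Theta" and tau: "\<tau> > 0" and d: "d > 0"
    and Th: "\<And>h. \<bar>h\<bar> < d \<Longrightarrow> th + h *\<^sub>R v \<in> Theta"
  shows "DERIV (\<lambda>h. shift x1 x2 \<tau> (th + h *\<^sub>R v)) 0 :>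
     (exp (th$4 * (x1 - x2)) * (v$4 * (x1 - x2) * Hc th \<tau> + Hc v \<tau>) - Hc v (shift x1 x2 \<tau> th + \<tau>))
       / k1 th (shift x1 x2 \<tau> th + \<tau>)"
proof -
  define uf where "uf = (\<lambda>h. shift x1 x2 \<tau> (th + h *\<^sub>R v) + \<tau>)"
  define E where "E = (\<lambda>h. exp ((th$4 + h * v$4) * (x1 - x2)) * (Hc th \<tau> + h * Hc v \<tau>))"
  define Ep where "Ep = exp (th$4 * (x1 - x2)) * (v$4 * (x1 - x2) * Hc th \<tau> + Hc v \<tau>)"
  define u0 where "u0 = uf 0"
  have u0': "u0 = shift x1 x2 \<tau> th + \<tau>" by (simp add: u0_def uf_def)
  have key: "uf h > 0 \<and> Hc th (uf h) + h * Hc v (uf h) = E h" if "\<bar>h\<bar> < d" for h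
    using shift_char[OF Th[OF that] tau, of x1 x2]
    by (simp add: uf_def E_def Hc_lin algebra_simps)
  have u0pos: "u0 > 0" and u0eq: "Hc th u0 = E 0" using key[of 0] d by (simp_all add: u0_def)
  have E_cont: "isCont E h" for h unfolding E_def by (intro continuous_intros)
  have E_der: "DERIV E 0 :> Ep"
    unfolding E_def Ep_def by (rule derivative_eq_intros refl | simp)+ (simp add: algebra_simps)
  have cont: "(uf \<longlongrightarrow> u0) (at 0)"
  proof (rule tendstoI)
    fix e :: real assume e: "e > 0"
    define e' where "e' = min e u0"
    have e': "e' > 0" "e' \<le> e" "u0 - e' \<ge> 0" using e u0pos by (auto simp: e'_def)
    define G where "G = (\<lambda>h w. Hc th w + h * Hc v w - E h)"
    have Gt: "((\<lambda>h. G h w) \<longlongrightarrow> G 0 w) (at 0)" for w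
      unfolding G_def using E_cont[of 0] by (intro tendsto_intros) (simp_all add: isCont_def)
    have "Hc th (u0 - e') < Hc th u0" by (rule Hc_strict_mono[OF th]) (use e' in auto)
    hence g1: "G 0 (u0 - e') < 0" using u0eq by (simp add: G_def)
    have "Hc th u0 < Hc th (u0 + e')" by (rule Hc_strict_mono[OF th]) (use e' u0pos in auto)
    hence g2: "G 0 (u0 + e') > 0" using u0eq by (simp add: G_def)
    have ev1: "eventually (\<lambda>h. G h (u0 - e') < 0) (at 0)" by (rule order_tendstoD(2)[OF Gt g1])
    have ev2: "eventually (\<lambda>h. G h (u0 + e') > 0) (at 0)" by (rule order_tendstoD(1)[OF Gt g2])
    show "eventually (\<lambda>h. dist (uf h) u0 < e) (at 0)"
      using ev1 ev2 ev_abs_lt[OF d]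
    proof eventually_elim
      case (elim h)
      have k: "uf h > 0" "G h (uf h) = 0" using key[OF elim(3)] by (simp_all add: G_def)
      have mono: "G h a < G h b" if "0 \<le> a" "a < b" for a b
        using Hc_strict_mono[OF Th[OF elim(3)] that] by (simp add: G_def Hc_lin)
      have "uf h > u0 - e'"
      proof (rule ccontr)
        assume "\<not> uf h > u0 - e'"
        hence "uf h < u0 - e' \<or> uf h = u0 - e'" by linarith
        thus False using mono[of "uf h" "u0 - e'"] k elim(1) by auto
      qed
      moreover have "uf h < u0 + e'"
      proof (rule ccontr)
        assume "\<not> uf h < u0 + e'"
        hence "uf h > u0 + e' \<or> uf h = u0 + e'" by linarith
        thus False using mono[of "u0 + e'" "uf h"] k elim(2) e' by auto
      qed
      ultimately show ?case using e' by (simp add: dist_real_def abs_less_iff)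
    qed
  qed
  have Eq: "((\<lambda>h. (E h - E 0) / (h - 0)) \<longlongrightarrow> Ep) (at 0)"
    using E_der by (simp add: has_field_derivative_iff)
  have lim: "((\<lambda>h. ((E h - E 0) / (h - 0) - Hc v (uf h)) / Sl th (uf h) u0) \<longlongrightarrow>
      (Ep - Hc v u0) / Sl th u0 u0) (at 0)"
  proof -
    have "((\<lambda>h. Hc v (uf h)) \<longlongrightarrow> Hc v u0) (at 0)"
      unfolding Hc_def by (intro tendsto_intros cont) auto
    moreover have "((\<lambda>h. Sl th (uf h) u0) \<longlongrightarrow> Sl th u0 u0) (at 0)"
      unfolding Sl_def by (intro tendsto_intros cont) auto
    moreover have "Sl th u0 u0 \<noteq> 0" using Sl_pos[OF th, of u0 u0] u0pos by simp
    ultimately show ?thesis using Eq by (intro tendsto_intros)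
  qed
  have "((\<lambda>h. (uf h - uf 0) / (h - 0)) \<longlongrightarrow> (Ep - Hc v u0) / Sl th u0 u0) (at 0)"
  proof (rule Lim_transform_eventually[OF lim])
    have "eventually (\<lambda>h. h \<noteq> 0) (at (0::real))" by (simp add: eventually_at_filter)
    thus "eventually (\<lambda>h. ((E h - E 0) / (h - 0) - Hc v (uf h)) / Sl th (uf h) u0 =
        (uf h - uf 0) / (h - 0)) (at 0)"
      using ev_abs_lt[OF d]
    proof eventually_elim
      case (elim h)
      have k: "uf h > 0" "Hc th (uf h) + h * Hc v (uf h) = E h" using key[OF elim(2)] by auto
      have S: "Sl th (uf h) u0 > 0" using Sl_pos[OF th, of "uf h" u0] k u0pos by simp
      have "Hc th (uf h) - Hc th u0 = Sl th (uf h) u0 * (uf h - u0)" by (rule Hc_diff)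
      hence "Sl th (uf h) u0 * (uf h - u0) = E h - E 0 - h * Hc v (uf h)" using k u0eq by simp
      hence e1: "uf h - u0 = (E h - E 0 - h * Hc v (uf h)) / Sl th (uf h) u0" using S
        by (simp add: field_simps)
      have "(E h - E 0) / (h - 0) - Hc v (uf h) = (E h - E 0 - h * Hc v (uf h)) / h"
        using elim(1) by (simp add: field_simps)
      thus ?case using e1 unfolding u0_def by (simp add: divide_divide_eq_left mult.commute)
    qed
  qed
  hence "DERIV uf 0 :> (Ep - Hc v u0) / Sl th u0 u0" by (simp add: has_field_derivative_iff)
  hence "DERIV (\<lambda>h. uf h - \<tau>) 0 :> (Ep - Hc v u0) / Sl th u0 u0"
    by (rule derivative_eq_intros) simp_all
  thus ?thesis by (simp add: uf_def Ep_def u0' Sl_same)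
qed

lemma Hc_deriv: "DERIV (Hc th) w :> k1 th w"
  unfolding Hc_def k1_def
  by (rule derivative_eq_intros refl | simp)+

lemma R1_deriv:
  "DERIV (\<lambda>h. R1 x1 (th + h *\<^sub>R v) t) 0 :>
     - R1 x1 th t * exp (th$4 * x1) * (x1 * v$4 * Hc th t + Hc v t)"
proof -
  have e: "(\<lambda>h. R1 x1 (th + h *\<^sub>R v) t) = (\<lambda>h. exp (- exp ((th$4 + h * v$4) * x1) * (Hc th t + h * Hc v t)))"
    by (simp add: R1_def Hc_lin)
  show ?thesis unfolding e
    by (rule derivative_eq_intros refl | simp)+ (simp add: R1_def algebra_simps)
qed

lemma R2_deriv:
  fixes th v :: "real^4" and x1 x2 \<tau> t :: real
  assumes th: "th \<in> Theta" and tau: "\<tau> > 0" and d: "d > 0"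
    and Th: "\<And>h. \<bar>h\<bar> < d \<Longrightarrow> th + h *\<^sub>R v \<in> Theta"
  defines "s \<equiv> shift x1 x2 \<tau> th"
  defines "s' \<equiv> (exp (th$4 * (x1 - x2)) * (v$4 * (x1 - x2) * Hc th \<tau> + Hc v \<tau>) - Hc v (s + \<tau>))
       / k1 th (s + \<tau>)"
  shows "DERIV (\<lambda>h. R2 x1 x2 \<tau> (th + h *\<^sub>R v) t) 0 :>
     - R2 x1 x2 \<tau> th t * exp (th$4 * x2) * (x2 * v$4 * Hc th (t + s) + Hc v (t + s) + k1 th (t + s) * s')"
proof -
  define sh where "sh = (\<lambda>h. shift x1 x2 \<tau> (th + h *\<^sub>R v))"
  have sh': "DERIV sh 0 :> s'" unfolding sh_def s'_def s_def by (rule u_deriv[OF th tau d Th])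
  have sh0: "sh 0 = s" by (simp add: sh_def s_def)
  have g: "DERIV (\<lambda>h. t + sh h) 0 :> s'"
    using sh' by (auto intro!: derivative_eq_intros)
  have F1: "DERIV (\<lambda>h. Hc th (t + sh h)) 0 :> k1 th (t + s) * s'"
    using DERIV_chain2[where f="Hc th" and g="\<lambda>h. t + sh h", OF _ g] Hc_deriv sh0 by simp
  have F2: "DERIV (\<lambda>h. Hc v (t + sh h)) 0 :> k1 v (t + s) * s'"
    using DERIV_chain2[where f="Hc v" and g="\<lambda>h. t + sh h", OF _ g] Hc_deriv sh0 by simp
  define Fh where "Fh = (\<lambda>h. Hc th (t + sh h) + h * Hc v (t + sh h))"
  have F: "DERIV Fh 0 :> k1 th (t + s) * s' + Hc v (t + s)"
    unfolding Fh_def by (rule derivative_eq_intros F1 F2 refl)+ (simp add: sh0)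
  have e: "(\<lambda>h. R2 x1 x2 \<tau> (th + h *\<^sub>R v) t) =
     (\<lambda>h. exp (- exp ((th$4 + h * v$4) * x2) * Fh h))"
    by (simp add: R2_def Hc_lin sh_def Fh_def)
  show ?thesis unfolding e
    by (rule F derivative_eq_intros refl | simp)+ (simp add: R2_def sh0 Fh_def s_def algebra_simps)
qed

lemma axis_comp: "axis i (1::real) $ j = (if j = i then 1 else 0)"
  by (simp add: axis_def)

lemma k1_pos: "th \<in> Theta \<Longrightarrow> 0 \<le> w \<Longrightarrow> k1 th w > 0"
  using Sl_pos[of th w w] Sl_same by simp

lemma k2_pos: assumes "th \<in> Theta" "0 \<le> w" shows "k2 th w > 0"
proof -
  have p: "th$1 > 0" "th$2 > 0" "th$3 > 0" using assms(1) by (auto simp: Theta_def)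
  have "0 \<le> th$3 / 3 * w^2" "0 \<le> th$2 / 2 * w" using p assms by simp_all
  thus ?thesis using p unfolding k2_def by linarith
qed

lemma dR1_eq:
  "dR1 x1 th t $ i = - R1 x1 th t * exp (th$4 * x1) * (x1 * axis i 1 $ 4 * Hc th t + Hc (axis i 1) t)"
proof -
  have Hv: "Hc (axis i 1) w = (if i = 1 then w else if i = 2 then w^2/2 else if i = 3 then w^3/3 else 0)" for w
    using exhaust_4[of i] by (auto simp: Hc_def axis_comp)
  show ?thesis unfolding Hv Hc_k2[of th t]
    using exhaust_4[of i] by (auto simp: dR1_def Let_def axis_comp)
qed

lemma dR2_eq:
  fixes th :: "real^4" and x1 x2 \<tau> t :: real and i :: 4
  assumes th: "th \<in> Theta" and tau: "\<tau> > 0"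
  defines "s \<equiv> shift x1 x2 \<tau> th"
  defines "v \<equiv> axis i (1::real)"
  defines "s' \<equiv> (exp (th$4 * (x1 - x2)) * (v$4 * (x1 - x2) * Hc th \<tau> + Hc v \<tau>) - Hc v (s + \<tau>))
       / k1 th (s + \<tau>)"
  shows "dR2 x1 x2 \<tau> th t $ i =
     - R2 x1 x2 \<tau> th t * exp (th$4 * x2) * (x2 * v$4 * Hc th (t + s) + Hc v (t + s) + k1 th (t + s) * s')"
proof -
  define u where "u = s + \<tau>"
  have u: "u > 0" "Hc th u = exp (th$4 * (x1 - x2)) * Hc th \<tau>"
    using shift_char[OF th tau, of x1 x2] by (simp_all add: u_def s_def)
  have k1u: "k1 th u > 0" using k1_pos[OF th] u by simp
  have k2u: "k2 th u > 0" using k2_pos[OF th] u by simp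
  have k2t: "k2 th \<tau> > 0" using k2_pos[OF th] tau by simp
  have cE: "exp (th$4 * (x1 - x2)) = u * k2 th u / (\<tau> * k2 th \<tau>)"
    using u(2) tau k2t by (simp add: Hc_k2 field_simps)
  have su: "s = u - \<tau>" by (simp add: u_def)
  have Hv: "Hc v w = (if i = 1 then w else if i = 2 then w^2/2 else if i = 3 then w^3/3 else 0)" for w
    using exhaust_4[of i] by (auto simp: v_def Hc_def axis_comp)
  have v4: "v$4 = (if i = 4 then 1 else 0)" by (simp add: v_def axis_comp)
  have Ht: "Hc th \<tau> = \<tau> * k2 th \<tau>" "Hc th (t + s) = (t + s) * k2 th (t + s)" by (simp_all add: Hc_k2)
  note ne = k1u k2u k2t tau
  have s_u: "s + \<tau> = u" "\<tau> + s = u" by (simp_all add: u_def)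
  consider "i = 1" | "i = 2" | "i = 3" | "i = 4" using exhaust_4[of i] by blast
  then show ?thesis
  proof cases
    case 1
    then show ?thesis using ne unfolding s'_def Hv v4 Ht cE
      by (simp add: dR2_def Let_def s_u flip: s_def) (simp add: field_simps)
  next
    case 2
    then show ?thesis using ne unfolding s'_def Hv v4 Ht cE
      by (simp add: dR2_def Let_def s_u flip: s_def) (simp add: field_simps, simp add: algebra_simps power2_eq_square)
  next
    case 3
    then show ?thesis using ne unfolding s'_def Hv v4 Ht cE
      by (simp add: dR2_def Let_def s_u flip: s_def) (simp add: field_simps, simp add: algebra_simps power2_eq_square power3_eq_cube)
  next
    case 4
    then show ?thesis using ne unfolding s'_def Hv v4 Ht cE
      by (simp add: dR2_def Let_def s_u flip: s_def)
  qed
qed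

lemma R1_R2_tau:
  assumes "th \<in> Theta" "\<tau> > 0"
  shows "R1 x1 th \<tau> = R2 x1 x2 \<tau> th \<tau>"
proof -
  have "exp (th$4 * x2) * Hc th (\<tau> + shift x1 x2 \<tau> th)
      = exp (th$4 * x2) * (exp (th$4 * (x1 - x2)) * Hc th \<tau>)"
    using shift_char(2)[OF assms, of x1 x2] by (simp add: add.commute)
  also have "\<dots> = exp (th$4 * x1) * Hc th \<tau>"
    by (simp add: mult.assoc[symmetric] exp_add[symmetric] algebra_simps)
  finally show ?thesis by (simp add: R1_def R2_def)
qed

lemma Rel_deriv1:
  assumes "t0 \<le> \<tau>"
  shows "DERIV (\<lambda>h. Rel x1 x2 \<tau> (th + h *\<^sub>R axis i 1) t0) 0 :> dR1 x1 th t0 $ i"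
  using R1_deriv[of x1 th "axis i 1" t0] assms by (simp add: Rel_def dR1_eq)

lemma Rel_deriv2:
  fixes th :: "real^4" and i :: 4
  assumes th: "th \<in> Theta" and tau: "\<tau> > 0" and d: "d > 0"
    and Th: "\<And>h. \<bar>h\<bar> < d \<Longrightarrow> th + h *\<^sub>R axis i 1 \<in> Theta"
    and t0: "t0 \<ge> \<tau>"
  shows "DERIV (\<lambda>h. Rel x1 x2 \<tau> (th + h *\<^sub>R axis i 1) t0) 0 :> dR2 x1 x2 \<tau> th t0 $ i"
proof -
  have D: "DERIV (\<lambda>h. R2 x1 x2 \<tau> (th + h *\<^sub>R axis i 1) t0) 0 :> dR2 x1 x2 \<tau> th t0 $ i"
    unfolding dR2_eq[OF th tau] by (rule R2_deriv[OF th tau d Th])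
  have "eventually (\<lambda>h. R2 x1 x2 \<tau> (th + h *\<^sub>R axis i 1) t0 = Rel x1 x2 \<tau> (th + h *\<^sub>R axis i 1) t0) (nhds 0)"
    using ev_abs_lt_nhds[OF d]
  proof eventually_elim
    case (elim h)
    show ?case
    proof (cases "t0 = \<tau>")
      case True
      then show ?thesis using R1_R2_tau[OF Th[OF elim] tau, of x1 x2] by (simp add: Rel_def)
    next
      case False
      then show ?thesis using t0 by (simp add: Rel_def)
    qed
  qed
  from DERIV_cong_ev[OF refl this refl] D show ?thesis by simp
qed

lemma R1_strict: assumes "th \<in> Theta" "0 \<le> a" "a < b" shows "R1 x1 th b < R1 x1 th a"
  using Hc_strict_mono[OF assms] by (simp add: R1_def)

lemma R2_strict: assumes "th \<in> Theta" "\<tau> > 0" "\<tau> \<le> a" "a < b"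
  shows "R2 x1 x2 \<tau> th b < R2 x1 x2 \<tau> th a"
proof -
  have "shift x1 x2 \<tau> th + \<tau> > 0" using shift_char[OF assms(1,2)] by simp
  hence "0 \<le> a + shift x1 x2 \<tau> th" using assms by linarith
  from Hc_strict_mono[OF assms(1) this, of "b + shift x1 x2 \<tau> th"] assms(4)
  show ?thesis by (simp add: R2_def)
qed

lemma Rel_strict: assumes "th \<in> Theta" "\<tau> > 0" "0 \<le> a" "a < b"
  shows "Rel x1 x2 \<tau> th b < Rel x1 x2 \<tau> th a"
proof (cases "b \<le> \<tau>")
  case True
  then show ?thesis using R1_strict[OF assms(1,3,4)] assms by (simp add: Rel_def)
next
  case False
  note nb = this
  show ?thesis
  proof (cases "a < \<tau>")
    case True
    have "R1 x1 th \<tau> < R1 x1 th a" using R1_strict[OF assms(1,3) True] .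
    moreover have "R2 x1 x2 \<tau> th b < R2 x1 x2 \<tau> th \<tau>" using R2_strict[OF assms(1,2), of \<tau> b] nb by simp
    ultimately show ?thesis using R1_R2_tau[OF assms(1,2), of x1 x2] True nb by (simp add: Rel_def)
  next
    case False
    have "R2 x1 x2 \<tau> th b < R2 x1 x2 \<tau> th a" using R2_strict[OF assms(1,2), of a b] False assms by simp
    thus ?thesis using R1_R2_tau[OF assms(1,2), of x1 x2] False nb by (auto simp: Rel_def)
  qed
qed

lemma telescope: "(\<Sum>j=1..(m::nat). g (j - 1) - g j) = g 0 - (g m :: real)"
  by (induction m) (simp_all add: sum.atLeast_Suc_atMost_Suc_shift)

lemma cellprob_sum:
  assumes "t 0 = 0" "\<tau> > 0"
  shows "(\<Sum>j=1..L+1. cellprob x1 x2 \<tau> t L th j) = 1"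
proof -
  have "(\<Sum>j=1..L+1. cellprob x1 x2 \<tau> t L th j) = (\<Sum>j=1..L. cellprob x1 x2 \<tau> t L th j) + cellprob x1 x2 \<tau> t L th (L+1)"
    by simp
  also have "(\<Sum>j=1..L. cellprob x1 x2 \<tau> t L th j) = (\<Sum>j=1..L. Rel x1 x2 \<tau> th (t (j - 1)) - Rel x1 x2 \<tau> th (t j))"
    by (rule sum.cong) (simp_all add: cellprob_def)
  also have "\<dots> = Rel x1 x2 \<tau> th (t 0) - Rel x1 x2 \<tau> th (t L)"
    by (rule telescope)
  finally show ?thesis using assms by (simp add: cellprob_def Rel_def R1_def)
qed

lemma tmono_gen:
  assumes "\<And>j. j < L \<Longrightarrow> (t::nat\<Rightarrow>real) j < t (Suc j)"
  shows "a < b \<Longrightarrow> b \<le> L \<Longrightarrow> t a < t b"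
proof (induction b)
  case 0 then show ?case by simp
next
  case (Suc b)
  have s: "t b < t (Suc b)" using assms Suc.prems by simp
  show ?case
  proof (cases "a = b")
    case True then show ?thesis using s by simp
  next
    case False
    hence "t a < t b" using Suc by simp
    then show ?thesis using s by simp
  qed
qed

theorem theorem2:
  fixes x1 x2 \<tau> \<beta> :: real and t :: "nat \<Rightarrow> real" and L k :: nat
    and n :: "nat \<Rightarrow> nat" and thhat :: "real^4"
  assumes "x1 < x2" and "\<tau> > 0"
    and "t 0 = 0" and "\<And>j. j < L \<Longrightarrow> t j < t (Suc j)"
    and "1 \<le> k" and "k < L" and "t k = \<tau>"
    and "(\<Sum>j=1..L+1. n j) > 0"
    and "\<beta> \<ge> 0"
    and "thhat \<in> Theta"
    and "\<forall>th\<in>Theta. dpd \<beta> L (phat n L) (cellprob x1 x2 \<tau> t L thhat)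
                     \<le> dpd \<beta> L (phat n L) (cellprob x1 x2 \<tau> t L th)"
  shows "Ubeta x1 x2 \<tau> t L n \<beta> thhat = 0"
proof -
  note th = assms(10) and tau = assms(2)
  have tmono: "\<And>a b. a < b \<Longrightarrow> b \<le> L \<Longrightarrow> t a < t b" using tmono_gen[where L=L and t=t] assms(4) by blast
  have tle: "\<And>a b. a \<le> b \<Longrightarrow> b \<le> L \<Longrightarrow> t a \<le> t b"
    by (metis le_less tmono)
  have tnn: "\<And>j. j \<le> L \<Longrightarrow> t j \<ge> 0" using tle[of 0] assms(3) by fastforce
  show ?thesis
  proof (rule vec_eq_iff[THEN iffD2], rule allI)
    fix i :: 4
    define v where "v = axis i (1::real)"
    define d where "d = thhat $ i"
    have d: "d > 0" using th by (simp add: d_def Theta_def)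
    have Th: "thhat + h *\<^sub>R v \<in> Theta" if "\<bar>h\<bar> < d" for h
      using th that unfolding Theta_def v_def d_def by (auto simp: axis_comp)
    define q where "q = (\<lambda>j h. cellprob x1 x2 \<tau> t L (thhat + h *\<^sub>R v) j)"
    define q0 where "q0 = (\<lambda>j. cellprob x1 x2 \<tau> t L thhat j)"
    define w where "w = (\<lambda>j. wrow x1 x2 \<tau> t L thhat j $ i)"
    define p where "p = phat n L"
    have q00: "q j 0 = q0 j" for j by (simp add: q_def q0_def)
    have dq: "DERIV (q j) 0 :> w j" if j: "j \<in> {1..L+1}" for j
    proof (cases "j \<le> L")
      case True
      have qj: "q j = (\<lambda>h. Rel x1 x2 \<tau> (thhat + h *\<^sub>R v) (t (j - 1)) - Rel x1 x2 \<tau> (thhat + h *\<^sub>R v) (t j))"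
        using True by (simp add: q_def cellprob_def fun_eq_iff)
      show ?thesis
      proof (cases "t (j - 1) < \<tau>")
        case lt: True
        have "j \<le> k"
        proof (rule ccontr)
          assume "\<not> j \<le> k"
          hence "t k \<le> t (j - 1)" using tle[of k "j - 1"] True by simp
          thus False using lt assms(7) by simp
        qed
        hence tj: "t j \<le> \<tau>" using tle[of j k] assms(6,7) by simp
        have w: "w j = dR1 x1 thhat (t (j - 1)) $ i - dR1 x1 thhat (t j) $ i"
          using True lt by (simp add: w_def wrow_def)
        show ?thesis unfolding qj w v_def
          by (intro DERIV_diff Rel_deriv1) (use lt tj in simp_all)
      next
        case ge: False
        have "t (j - 1) < t j" using tmono[of "j - 1" j] True j by simp
        hence tj: "t j \<ge> \<tau>" using ge by simp
        have w: "w j = dR2 x1 x2 \<tau> thhat (t (j - 1)) $ i - dR2 x1 x2 \<tau> thhat (t j) $ i"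
          using True ge by (simp add: w_def wrow_def)
        show ?thesis unfolding qj w v_def
          by (intro DERIV_diff Rel_deriv2[OF th tau d Th[unfolded v_def]]) (use ge tj in simp_all)
      qed
    next
      case False
      hence jL: "j = L + 1" using j by simp
      have qj: "q j = (\<lambda>h. Rel x1 x2 \<tau> (thhat + h *\<^sub>R v) (t L))"
        using jL by (simp add: q_def cellprob_def fun_eq_iff)
      have "t k < t L" using tmono[of k L] assms(6) by simp
      hence tL: "t L \<ge> \<tau>" using assms(7) by simp
      have w: "w j = dR2 x1 x2 \<tau> thhat (t L) $ i" using jL by (simp add: w_def wrow_def)
      show ?thesis unfolding qj w v_def
        by (rule Rel_deriv2[OF th tau d Th[unfolded v_def] tL])
    qed
    have qpos: "q0 j > 0" if j: "j \<in> {1..L+1}" for j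
    proof (cases "j \<le> L")
      case True
      have "Rel x1 x2 \<tau> thhat (t j) < Rel x1 x2 \<tau> thhat (t (j - 1))"
        using Rel_strict[OF th tau tnn tmono[of "j - 1" j]] True j by simp
      thus ?thesis using True by (simp add: q0_def cellprob_def)
    next
      case False
      thus ?thesis by (simp add: q0_def cellprob_def Rel_def R1_def R2_def)
    qed
    have sumw: "(\<Sum>j=1..L+1. w j) = 0"
    proof -
      have "DERIV (\<lambda>h. \<Sum>j=1..L+1. q j h) 0 :> (\<Sum>j=1..L+1. w j)"
        by (rule DERIV_sum) (rule dq)
      moreover have "(\<lambda>h. \<Sum>j=1..L+1. q j h) = (\<lambda>h. 1)"
        unfolding q_def using cellprob_sum[where t=t and \<tau>=\<tau>] assms(3) tau by simp
      ultimately have "DERIV (\<lambda>h. 1::real) 0 :> (\<Sum>j=1..L+1. w j)" by simp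
      thus ?thesis using DERIV_const DERIV_unique by blast
    qed
    have pnn: "p j \<ge> 0" for j unfolding p_def phat_def by (intro divide_nonneg_nonneg) (simp_all add: sum_nonneg add_nonneg_nonneg)
    define f where "f = (\<lambda>h. dpd \<beta> L p (\<lambda>j. q j h))"
    have locmin: "\<forall>y. \<bar>0 - y\<bar> < d \<longrightarrow> f 0 \<le> f y"
    proof (intro allI impI)
      fix y :: real assume "\<bar>0 - y\<bar> < d"
      hence "thhat + y *\<^sub>R v \<in> Theta" using Th by simp
      with assms(11) show "f 0 \<le> f y"
        by (simp add: f_def q_def p_def)
    qed
    have U: "Ubeta x1 x2 \<tau> t L n \<beta> thhat $ i = (\<Sum>j=1..L+1. w j * q0 j powr (\<beta> - 1) * (p j - q0 j))"
      by (simp add: Ubeta_def w_def q0_def p_def)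
    show "Ubeta x1 x2 \<tau> t L n \<beta> thhat $ i = 0 $ i"
    proof (cases "\<beta> = 0")
      case True
      have f: "f = (\<lambda>h. \<Sum>j=1..L+1. p j * ln (p j / q j h))"
        by (simp add: f_def dpd_def True)
      have dterm: "DERIV (\<lambda>h. p j * ln (p j / q j h)) 0 :> - (p j * w j / q0 j)"
        if j: "j \<in> {1..L+1}" for j
      proof (cases "p j = 0")
        case True
        then show ?thesis by simp
      next
        case False
        hence pj: "p j > 0" using pnn[of j] by simp
        have qj: "q0 j > 0" using qpos[OF j] .
        have A: "DERIV (\<lambda>h. p j / q j h) 0 :> (0 * q0 j - p j * w j) / (q0 j * q0 j)"
          using DERIV_divide[OF DERIV_const dq[OF j], of "p j"] qj by (simp add: q00)
        have B: "DERIV (\<lambda>h. ln (p j / q j h)) 0 :> 1 / (p j / q0 j) * ((0 * q0 j - p j * w j) / (q0 j * q0 j))"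
          using DERIV_chain2[OF DERIV_ln_divide A] pj qj by (simp add: q00)
        have C: "DERIV (\<lambda>h. p j * ln (p j / q j h)) 0 :> p j * (1 / (p j / q0 j) * ((0 * q0 j - p j * w j) / (q0 j * q0 j)))"
          by (rule DERIV_cmult[OF B])
        show ?thesis using C pj qj by (simp add: field_simps)
      qed
      have "DERIV f 0 :> (\<Sum>j=1..L+1. - (p j * w j / q0 j))"
        unfolding f by (rule DERIV_sum) (rule dterm)
      from DERIV_local_min[OF this d locmin]
      have z: "(\<Sum>j=1..L+1. p j * w j / q0 j) = 0" by (simp add: sum_negf)
      have "(\<Sum>j=1..L+1. w j * q0 j powr (\<beta> - 1) * (p j - q0 j))
          = (\<Sum>j=1..L+1. p j * w j / q0 j - w j)"
      proof (rule sum.cong[OF refl])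
        fix j assume j: "j \<in> {1..L+1}"
        show "w j * q0 j powr (\<beta> - 1) * (p j - q0 j) = p j * w j / q0 j - w j"
          using qpos[OF j] True by (simp add: powr_neg_one field_simps)
      qed
      also have "\<dots> = 0" using z sumw by (simp add: sum_subtractf)
      finally show ?thesis using U by simp
    next
      case False
      hence bp: "\<beta> > 0" using assms(9) by simp
      have f: "f = (\<lambda>h. \<Sum>j=1..L+1. q j h powr (\<beta> + 1) - (1 + 1 / \<beta>) * q j h powr \<beta> * p j
                         + 1 / \<beta> * p j powr (\<beta> + 1))"
        by (simp add: f_def dpd_def False)
      have dterm: "DERIV (\<lambda>h. q j h powr (\<beta> + 1) - (1 + 1 / \<beta>) * q j h powr \<beta> * p j
                         + 1 / \<beta> * p j powr (\<beta> + 1)) 0 :>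
           (\<beta> + 1) * (w j * q0 j powr (\<beta> - 1) * (q0 j - p j))"
        if j: "j \<in> {1..L+1}" for j
      proof -
        have qj: "q0 j > 0" using qpos[OF j] .
        have P1: "DERIV (\<lambda>h. q j h powr (\<beta> + 1)) 0 :> (\<beta> + 1) * q0 j powr \<beta> * w j"
          using DERIV_fun_powr[OF dq[OF j], of "\<beta> + 1"] qj by (simp add: q00)
        have P2: "DERIV (\<lambda>h. q j h powr \<beta>) 0 :> \<beta> * q0 j powr (\<beta> - 1) * w j"
          using DERIV_fun_powr[OF dq[OF j], of "\<beta>"] qj by (simp add: q00)
        have Dd: "DERIV (\<lambda>h. q j h powr (\<beta> + 1) - (1 + 1 / \<beta>) * q j h powr \<beta> * p j
                         + 1 / \<beta> * p j powr (\<beta> + 1)) 0 :>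
           (\<beta> + 1) * q0 j powr \<beta> * w j - (1 + 1 / \<beta>) * (\<beta> * q0 j powr (\<beta> - 1) * w j) * p j + 0"
          by (intro DERIV_add DERIV_diff P1 DERIV_cmult_right DERIV_cmult DERIV_const P2)
        have pw: "q0 j powr \<beta> = q0 j powr (\<beta> - 1) * q0 j"
          using powr_add[of "q0 j" "\<beta> - 1" 1] qj by simp
        have eqv: "(\<beta> + 1) * q0 j powr \<beta> * w j - (1 + 1 / \<beta>) * (\<beta> * q0 j powr (\<beta> - 1) * w j) * p j + 0
            = (\<beta> + 1) * (w j * q0 j powr (\<beta> - 1) * (q0 j - p j))"
          unfolding pw using bp by (simp add: field_simps)
        show ?thesis using Dd unfolding eqv .
      qed
      have "DERIV f 0 :> (\<Sum>j=1..L+1. (\<beta> + 1) * (w j * q0 j powr (\<beta> - 1) * (q0 j - p j)))"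
        unfolding f by (rule DERIV_sum) (rule dterm)
      from DERIV_local_min[OF this d locmin]
      have "(\<beta> + 1) * (\<Sum>j=1..L+1. w j * q0 j powr (\<beta> - 1) * (q0 j - p j)) = 0"
        by (simp only: sum_distrib_left)
      hence z: "(\<Sum>j=1..L+1. w j * q0 j powr (\<beta> - 1) * (q0 j - p j)) = 0" using bp by simp
      have "(\<Sum>j=1..L+1. w j * q0 j powr (\<beta> - 1) * (p j - q0 j))
          = - (\<Sum>j=1..L+1. w j * q0 j powr (\<beta> - 1) * (q0 j - p j))"
        unfolding sum_negf[symmetric] by (rule sum.cong) (simp_all add: algebra_simps)
      then show ?thesis using U z by simp
    qed
  qed
qed

end
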